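(* Let $\mathbb X,\mathbb Y,\mathbb X^\sharp,\mathbb Y^\sharp$ be sets, $c:\mathbb X\times\mathbb X^\sharp\to\overline{\mathbb R}$ and $d:\mathbb Y\times\mathbb Y^\sharp\to\overline{\mathbb R}$ couplings, $E:\mathbb X\times\mathbb Y^\sharp\to\overline{\mathbb R}$, $f:\mathbb X\to\overline{\mathbb R}$ and $g:\mathbb Y\to\overline{\mathbb R}$. If $$f(x)\ge\inf_{y\in\mathbb Y}\Big(\sup_{y^\sharp\in\mathbb Y^\sharp}\big(d(y,y^\sharp)\mathbin{\underset{\cdot}{+}}(-E(x,y^\sharp))\big)\mathbin{\overset{\cdot}{+}} g(y)\Big)\quad\text{for all }x\in\mathbb X,$$ then $$f^{c}(x^\sharp)\le\inf_{y^\sharp\in\mathbb Y^\sharp}\Big(\sup_{x\in\mathbb X}\big(c(x,x^\sharp)\mathbin{\underset{\cdot}{+}} E(x,y^\sharp)\big)\mathbin{\overset{\cdot}{+}} g^{-d}(y^\sharp)\Big)\quad\text{for all }x^\sharp\in\mathbb X^\sharp.$$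
   Context: $\overline{\mathbb R}=[-\infty,+\infty]$. The Moreau lower addition $\mathbin{\underset{\cdot}{+}}$ is usual addition extended by $(+\infty)\mathbin{\underset{\cdot}{+}}(-\infty)=(-\infty)\mathbin{\underset{\cdot}{+}}(+\infty)=-\infty$; the Moreau upper addition $\mathbin{\overset{\cdot}{+}}$ is usual addition extended by $(+\infty)\mathbin{\overset{\cdot}{+}}(-\infty)=(-\infty)\mathbin{\overset{\cdot}{+}}(+\infty)=+\infty$. $f^{c}(x^\sharp)=\sup_{x}\big(c(x,x^\sharp)\mathbin{\underset{\cdot}{+}}(-f(x))\big)$ and $g^{-d}(y^\sharp)=\sup_{y}\big((-d(y,y^\sharp))\mathbin{\underset{\cdot}{+}}(-g(y))\big)$. *)

theory Defs
  imports "HOL-Analysis.Analysis"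
begin

definition lower_add :: "ereal \<Rightarrow> ereal \<Rightarrow> ereal" (infixl "+\<^sub>l" 65) where
  "a +\<^sub>l b = (if (a = \<infinity> \<and> b = -\<infinity>) \<or> (a = -\<infinity> \<and> b = \<infinity>) then -\<infinity> else a + b)"

definition upper_add :: "ereal \<Rightarrow> ereal \<Rightarrow> ereal" (infixl "+\<^sub>u" 65) where
  "a +\<^sub>u b = (if (a = \<infinity> \<and> b = -\<infinity>) \<or> (a = -\<infinity> \<and> b = \<infinity>) then \<infinity> else a + b)"

definition c_conj :: "('x \<Rightarrow> 'xs \<Rightarrow> ereal) \<Rightarrow> ('x \<Rightarrow> ereal) \<Rightarrow> 'xs \<Rightarrow> ereal" where
  "c_conj c f xs = (SUP x. c x xs +\<^sub>l (- f x))"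

definition negd_conj :: "('y \<Rightarrow> 'ys \<Rightarrow> ereal) \<Rightarrow> ('y \<Rightarrow> ereal) \<Rightarrow> 'ys \<Rightarrow> ereal" where
  "negd_conj d g ys = (SUP y. (- d y ys) +\<^sub>l (- g y))"

end

theory Submission
  imports Defs
begin

lemma triple:
  fixes c e d g :: ereal
  shows "c +\<^sub>l ((e +\<^sub>u (- d)) +\<^sub>l (- g)) \<le> (c +\<^sub>l e) +\<^sub>u ((- d) +\<^sub>l (- g))"
  by (cases c; cases e; cases d; cases g) (auto simp: lower_add_def upper_add_def)

lemma neg_upper: "- ((a::ereal) +\<^sub>u b) = (- a) +\<^sub>l (- b)"
  by (cases a; cases b) (auto simp: lower_add_def upper_add_def)

lemma lower_mono: "(b::ereal) \<le> b' \<Longrightarrow> a +\<^sub>l b \<le> a +\<^sub>l b'"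
  by (cases a; cases b; cases b') (auto simp: lower_add_def)

lemma lower_mono2: "(a::ereal) \<le> a' \<Longrightarrow> b \<le> b' \<Longrightarrow> a +\<^sub>l b \<le> a' +\<^sub>l b'"
  by (cases a; cases a'; cases b; cases b') (auto simp: lower_add_def)

lemma upper_mono: "(a::ereal) \<le> a' \<Longrightarrow> b \<le> b' \<Longrightarrow> a +\<^sub>u b \<le> a' +\<^sub>u b'"
  by (cases a; cases a'; cases b; cases b') (auto simp: upper_add_def)

lemma lower_SUP:
  fixes c :: ereal and h :: "'a \<Rightarrow> ereal"
  shows "c +\<^sub>l (SUP y. h y) \<le> (SUP y. c +\<^sub>l h y)"
proof (cases c)
  case (real r)
  have "c +\<^sub>l (SUP y. h y) = (SUP y. h y) + c" using real by (simp add: lower_add_def add.commute)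
  also have "\<dots> = (SUP y. h y + c)" by (rule SUP_ereal_add_left[symmetric]) (use real in auto)
  also have "\<dots> = (SUP y. c +\<^sub>l h y)" using real by (simp add: lower_add_def add.commute)
  finally show ?thesis by (rule eq_refl)
next
  case PInf
  show ?thesis
  proof (cases "(SUP y. h y) = -\<infinity>")
    case True
    have m: "c +\<^sub>l (SUP y. h y) = -\<infinity>" unfolding True by (simp add: lower_add_def)
    show ?thesis by (rule order_trans[OF eq_refl[OF m]]) simp
  next
    case False
    then obtain y where y: "h y \<noteq> -\<infinity>" using False unfolding bot_ereal_def[symmetric] SUP_bot_conv by auto
    then have "c +\<^sub>l h y = \<infinity>" using PInf by (simp add: lower_add_def)
    moreover have "c +\<^sub>l h y \<le> (SUP y. c +\<^sub>l h y)" by (rule SUP_upper) simp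
    ultimately have "(SUP y. c +\<^sub>l h y) = \<infinity>" by simp
    then show ?thesis by simp
  qed
next
  case MInf
  then have m: "c +\<^sub>l (SUP y. h y) = -\<infinity>" by (simp add: lower_add_def)
  show ?thesis by (rule order_trans[OF eq_refl[OF m]]) simp
qed

theorem proposition4:
  fixes c :: "'x \<Rightarrow> 'xs \<Rightarrow> ereal" and d :: "'y \<Rightarrow> 'ys \<Rightarrow> ereal"
    and E :: "'x \<Rightarrow> 'ys \<Rightarrow> ereal" and f :: "'x \<Rightarrow> ereal" and g :: "'y \<Rightarrow> ereal"
  assumes "\<forall>x. f x \<ge> (INF y. (SUP ys. d y ys +\<^sub>l (- E x ys)) +\<^sub>u g y)"
  shows "\<forall>xs. c_conj c f xs \<le> (INF ys. (SUP x. c x xs +\<^sub>l E x ys) +\<^sub>u negd_conj d g ys)"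
proof (intro allI)
  fix xs
  show "c_conj c f xs \<le> (INF ys. (SUP x. c x xs +\<^sub>l E x ys) +\<^sub>u negd_conj d g ys)"
    unfolding c_conj_def
  proof (intro INF_greatest SUP_least)
    fix x ys
    assume "x \<in> (UNIV::'x set)" "ys \<in> (UNIV::'ys set)"
    let ?k = "\<lambda>y. (SUP ys. d y ys +\<^sub>l (- E x ys)) +\<^sub>u g y"
    let ?h = "\<lambda>y. (E x ys +\<^sub>u (- d y ys)) +\<^sub>l (- g y)"
    have "- f x \<le> - (INF y. ?k y)" using assms by simp
    also have "\<dots> = (SUP y. - ?k y)" by (simp add: ereal_SUP_uminus_eq)
    also have "\<dots> \<le> (SUP y. ?h y)"
    proof (rule SUP_mono, intro bexI[of _ _] UNIV_I)
      fix y
      have "d y ys +\<^sub>l (- E x ys) \<le> (SUP ys. d y ys +\<^sub>l (- E x ys))" by (rule SUP_upper) simp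
      then have "- (SUP ys. d y ys +\<^sub>l (- E x ys)) \<le> - (d y ys +\<^sub>l (- E x ys))" by simp
      also have "- (d y ys +\<^sub>l (- E x ys)) = E x ys +\<^sub>u (- d y ys)"
        by (cases "d y ys"; cases "E x ys") (auto simp: lower_add_def upper_add_def)
      finally have "- (SUP ys. d y ys +\<^sub>l (- E x ys)) \<le> E x ys +\<^sub>u (- d y ys)" .
      then show "- ?k y \<le> ?h y" unfolding neg_upper by (rule lower_mono2) simp
    qed
    finally have 1: "- f x \<le> (SUP y. ?h y)" .
    have "c x xs +\<^sub>l (- f x) \<le> c x xs +\<^sub>l (SUP y. ?h y)" using 1 by (rule lower_mono)
    also have "\<dots> \<le> (SUP y. c x xs +\<^sub>l ?h y)" by (rule lower_SUP)
    also have "\<dots> \<le> (SUP x. c x xs +\<^sub>l E x ys) +\<^sub>u negd_conj d g ys"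
    proof (rule SUP_least)
      fix y
      have "c x xs +\<^sub>l ?h y \<le> (c x xs +\<^sub>l E x ys) +\<^sub>u ((- d y ys) +\<^sub>l (- g y))" by (rule triple)
      also have "\<dots> \<le> (SUP x. c x xs +\<^sub>l E x ys) +\<^sub>u negd_conj d g ys"
        unfolding negd_conj_def by (intro upper_mono SUP_upper) auto
      finally show "c x xs +\<^sub>l ?h y \<le> (SUP x. c x xs +\<^sub>l E x ys) +\<^sub>u negd_conj d g ys" .
    qed
    finally show "c x xs +\<^sub>l (- f x) \<le> (SUP x. c x xs +\<^sub>l E x ys) +\<^sub>u negd_conj d g ys" .
  qed
qed

end
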